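(* Let $D$ be a digraph with $\chi(D)>\omega$. Then the one-way infinite directed path $\vec P_\omega$ embeds into $D$. Moreover, if $T$ is any orientation of the rooted tree in which every vertex has countably infinitely many children, then $T$ embeds into $D$.
   Context: A digraph is a pair $D=(V,E)$ with $E\subseteq V^2$ such that $uv\in E$ implies $vu\notin E$. The dichromatic number $\chi(D)$ is the minimal number of acyclic vertex sets (sets inducing no directed cycle) needed to cover the vertex set of $D$. Embedding means as a not necessarily induced subdigraph. An orientation of an undirected graph assigns to each edge exactly one direction. *)

theory Defs
  imports Main "HOL-Library.Countable_Set"
begin

definition digraph :: "'a set \<Rightarrow> ('a \<times> 'a) set \<Rightarrow> bool" where
  "digraph V E \<longleftrightarrow> E \<subseteq> V \<times> V \<and> (\<forall>u v. (u, v) \<in> E \<longrightarrow> (v, u) \<notin> E)"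

definition acyclic_set :: "('a \<times> 'a) set \<Rightarrow> 'a set \<Rightarrow> bool" where
  "acyclic_set E A \<longleftrightarrow> acyclic (E \<inter> (A \<times> A))"

definition dichromatic_le_omega :: "'a set \<Rightarrow> ('a \<times> 'a) set \<Rightarrow> bool" where
  "dichromatic_le_omega V E \<longleftrightarrow>
     (\<exists>\<A>. countable \<A> \<and> (\<forall>A\<in>\<A>. A \<subseteq> V \<and> acyclic_set E A) \<and> V \<subseteq> \<Union>\<A>)"

definition embeds :: "'b set \<Rightarrow> ('b \<times> 'b) set \<Rightarrow> 'a set \<Rightarrow> ('a \<times> 'a) set \<Rightarrow> bool" where
  "embeds VH EH V E \<longleftrightarrow>
     (\<exists>f. inj_on f VH \<and> f ` VH \<subseteq> V \<and> (\<forall>(x, y) \<in> EH. (f x, f y) \<in> E))"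

definition ray_edges :: "(nat \<times> nat) set" where
  "ray_edges = {(n, Suc n) | n. True}"

text \<open>The rooted tree in which every vertex has countably infinitely many children:
  vertices are finite sequences of naturals, the root is [], the children of s are s @ [n].\<close>
definition tree_orientation_edges :: "(nat list \<Rightarrow> nat \<Rightarrow> bool) \<Rightarrow> (nat list \<times> nat list) set" where
  "tree_orientation_edges d =
     {(s, s @ [n]) | s n. d s n} \<union> {(s @ [n], s) | s n. \<not> d s n}"

end

theory Submission
  imports Defs
begin


lemma countable_reach:
  assumes fin: "\<And>x. finite (R x)"
  shows "countable ({(x,y). y \<in> R x}\<^sup>* `` {v})"
proof -
  let ?Rel = "{(x,y). y \<in> R x}"
  have fn: "finite ((?Rel ^^ n) `` {v})" for n
  proof (induction n)
    case 0 then show ?case by simp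
  next
    case (Suc n)
    have "(?Rel ^^ Suc n) `` {v} = ?Rel `` ((?Rel ^^ n) `` {v})"
      by (simp add: relcomp_Image)
    also have "\<dots> = (\<Union>x\<in>(?Rel ^^ n) `` {v}. R x)" by auto
    finally show ?case using Suc fin by simp
  qed
  have "?Rel\<^sup>* `` {v} = (\<Union>n. (?Rel ^^ n) `` {v})"
    by (auto simp: rtrancl_is_UN_relpow)
  moreover have "countable (\<Union>n. (?Rel ^^ n) `` {v})"
    by (rule countable_UN) (auto intro: countable_finite fn)
  ultimately show ?thesis by simp
qed

lemma ex_avoid:
  assumes "finite K"
  shows "\<exists>k. prod_encode (a, k) \<notin> K"
proof (rule ccontr)
  assume "\<not> ?thesis"
  then have "range (\<lambda>k. prod_encode (a, k)) \<subseteq> K" by auto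
  then have "finite (range (\<lambda>k. prod_encode (a, k)))" using assms finite_subset by blast
  moreover have "inj (\<lambda>k::nat. prod_encode (a, k))" by (auto simp: inj_def)
  ultimately have "finite (UNIV :: nat set)" using finite_imageD by blast
  then show False by simp
qed

definition pvalid :: "('a \<Rightarrow> 'a set) \<Rightarrow> ('a \<times> nat) set \<Rightarrow> bool" where
  "pvalid R G \<longleftrightarrow> (\<forall>x k k'. (x,k)\<in>G \<longrightarrow> (x,k')\<in>G \<longrightarrow> k=k')
     \<and> (\<forall>x k y. (x,k)\<in>G \<longrightarrow> y \<in> R x \<longrightarrow> y \<in> Domain G)
     \<and> (\<forall>x k y k'. (x,k)\<in>G \<longrightarrow> y \<in> R x \<longrightarrow> (y,k')\<in>G \<longrightarrow> k\<noteq>k')"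

lemma the_pair: "(x,k)\<in>M \<Longrightarrow> (\<And>k'. (x,k')\<in>M \<Longrightarrow> k'=k) \<Longrightarrow> (THE k. (x,k)\<in>M) = k"
  by (rule the_equality)

lemma pv1: "pvalid R G \<Longrightarrow> (x,k)\<in>G \<Longrightarrow> (x,k')\<in>G \<Longrightarrow> k=k'"
  unfolding pvalid_def by metis
lemma pv2: "pvalid R G \<Longrightarrow> (x,k)\<in>G \<Longrightarrow> y \<in> R x \<Longrightarrow> y \<in> Domain G"
  unfolding pvalid_def by metis
lemma pv3: "pvalid R G \<Longrightarrow> (x,k)\<in>G \<Longrightarrow> y \<in> R x \<Longrightarrow> (y,k')\<in>G \<Longrightarrow> k\<noteq>k'"
  unfolding pvalid_def by metis

lemma colouring:
  fixes R :: "'a \<Rightarrow> 'a set"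
  assumes fin: "\<And>x. finite (R x)" and nl: "\<And>x. x \<notin> R x"
  shows "\<exists>c::'a\<Rightarrow>nat. \<forall>x y. y \<in> R x \<longrightarrow> c x \<noteq> c y"
proof -
  let ?A = "{G. pvalid R G}"
  have "\<forall>C\<in>chains ?A. \<Union>C \<in> ?A"
  proof
    fix C assume C: "C \<in> chains ?A"
    then have sub: "C \<subseteq> ?A" and ch: "\<forall>X\<in>C. \<forall>Y\<in>C. X \<subseteq> Y \<or> Y \<subseteq> X"
      by (auto simp: chains_def chain_subset_def)
    show "\<Union>C \<in> ?A" unfolding mem_Collect_eq pvalid_def
    proof (intro conjI allI impI)
      fix x k k' assume "(x,k) \<in> \<Union>C" "(x,k') \<in> \<Union>C"
      then obtain X Y where "X\<in>C" "Y\<in>C" "(x,k)\<in>X" "(x,k')\<in>Y" by auto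
      moreover have "X \<subseteq> Y \<or> Y \<subseteq> X" using ch \<open>X\<in>C\<close> \<open>Y\<in>C\<close> by blast
      moreover have "pvalid R X" "pvalid R Y" using sub \<open>X\<in>C\<close> \<open>Y\<in>C\<close> by auto
      ultimately show "k = k'" using pv1 by (metis subsetD)
    next
      fix x k y assume "(x,k) \<in> \<Union>C" "y \<in> R x"
      then obtain X where "X\<in>C" "(x,k)\<in>X" by auto
      moreover have "pvalid R X" using sub \<open>X\<in>C\<close> by auto
      ultimately have "y \<in> Domain X" using pv2 \<open>y \<in> R x\<close> by metis
      with \<open>X\<in>C\<close> show "y \<in> Domain (\<Union>C)" by auto
    next
      fix x k y k' assume "(x,k) \<in> \<Union>C" "y \<in> R x" "(y,k') \<in> \<Union>C"
      then obtain X Y where "X\<in>C" "Y\<in>C" "(x,k)\<in>X" "(y,k')\<in>Y" by auto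
      moreover have "X \<subseteq> Y \<or> Y \<subseteq> X" using ch \<open>X\<in>C\<close> \<open>Y\<in>C\<close> by blast
      moreover have "pvalid R X" "pvalid R Y" using sub \<open>X\<in>C\<close> \<open>Y\<in>C\<close> by auto
      ultimately show "k \<noteq> k'" using pv3 \<open>y \<in> R x\<close> by (metis subsetD)
    qed
  qed
  then obtain M where MA: "M \<in> ?A" and mx: "\<forall>X\<in>?A. M \<subseteq> X \<longrightarrow> X = M"
    using Zorn_Lemma by blast
  have Mv: "pvalid R M" using MA by simp
  have dom: "Domain M = UNIV"
  proof (rule ccontr)
    assume "Domain M \<noteq> UNIV"
    then obtain v where v: "v \<notin> Domain M" by auto
    let ?Rel = "{(x,y). y \<in> R x}"
    define C where "C = ?Rel\<^sup>* `` {v} - Domain M"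
    have cC: "countable C" unfolding C_def using countable_reach[OF fin] by (rule countable_subset[rotated]) auto
    define e where "e = to_nat_on C"
    have ie: "inj_on e C" unfolding e_def using cC by auto
    define K where "K x = (\<lambda>y. THE k. (y,k)\<in>M) ` R x" for x
    have fK: "finite (K x)" for x unfolding K_def using fin by simp
    define col where "col x = prod_encode (e x, SOME k. prod_encode (e x, k) \<notin> K x)" for x
    have colK: "col x \<notin> K x" for x
      unfolding col_def using someI_ex[OF ex_avoid[OF fK]] by blast
    define G where "G = M \<union> {(x, col x) | x. x \<in> C}"
    have CM: "x \<in> C \<Longrightarrow> x \<notin> Domain M" for x unfolding C_def by auto
    have Cstep: "x \<in> C \<Longrightarrow> y \<in> R x \<Longrightarrow> y \<in> Domain M \<or> y \<in> C" for x y
    proof -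
      assume "x \<in> C" "y \<in> R x"
      then have "(v,x) \<in> ?Rel\<^sup>*" unfolding C_def by auto
      then have "(v,y) \<in> ?Rel\<^sup>*" using \<open>y \<in> R x\<close> by (auto intro: rtrancl_into_rtrancl)
      then show ?thesis unfolding C_def by auto
    qed
    have Mfun: "(x,k)\<in>M \<Longrightarrow> (x,k')\<in>M \<Longrightarrow> k = k'" for x k k' using Mv pv1 pv2 pv3 by metis
    have Mcl: "(x,k)\<in>M \<Longrightarrow> y \<in> R x \<Longrightarrow> y \<in> Domain M" for x k y using Mv pv1 pv2 pv3 by metis
    have Mpr: "(x,k)\<in>M \<Longrightarrow> y \<in> R x \<Longrightarrow> (y,k')\<in>M \<Longrightarrow> k \<noteq> k'" for x k y k' using Mv pv1 pv2 pv3 by metis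
    have Gv: "pvalid R G" unfolding pvalid_def
    proof (intro conjI allI impI)
      fix x k k' assume "(x,k) \<in> G" "(x,k') \<in> G"
      then show "k = k'" unfolding G_def using Mfun CM by (auto simp: Domain.simps)
    next
      fix x k y assume "(x,k) \<in> G" "y \<in> R x"
      then show "y \<in> Domain G" unfolding G_def using Mcl Cstep by (simp add: Domain.simps) metis
    next
      fix x k y k' assume xk: "(x,k) \<in> G" and y: "y \<in> R x" and yk: "(y,k') \<in> G"
      show "k \<noteq> k'"
      proof (cases "(x,k) \<in> M")
        case True
        then have "y \<in> Domain M" using Mcl y by blast
        then have "(y,k') \<in> M" using yk CM unfolding G_def by auto
        then show ?thesis using Mpr True y by blast
      next
        case False
        then have xC: "x \<in> C" and kx: "k = col x" using xk unfolding G_def by auto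
        show ?thesis
        proof (cases "y \<in> Domain M")
          case True
          then have yM: "(y,k') \<in> M" using yk CM unfolding G_def by auto
          have "(THE k. (y,k)\<in>M) = k'" by (rule the_pair[OF yM]) (rule Mfun[OF _ yM])
          then have "k' \<in> K x" unfolding K_def using y by force
          then show ?thesis using colK kx by auto
        next
          case False
          then have yC: "y \<in> C" and ky: "k' = col y" using yk unfolding G_def by auto
          show ?thesis
          proof
            assume "k = k'"
            then have "e x = e y" using kx ky unfolding col_def by simp
            then have "x = y" using ie xC yC by (auto dest: inj_onD)
            then show False using y nl by simp
          qed
        qed
      qed
    qed
    have "M \<subseteq> G" unfolding G_def by auto
    then have "G = M" using mx Gv by blast
    moreover have "v \<in> C" unfolding C_def using v by auto
    ultimately show False using CM unfolding G_def by auto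
  qed
  have Mfun': "(x,k)\<in>M \<Longrightarrow> (x,k')\<in>M \<Longrightarrow> k = k'" for x k k' using Mv pv1 pv2 pv3 by metis
  define c where "c x = (THE k. (x,k)\<in>M)" for x
  have cM: "(x, c x) \<in> M" for x
  proof -
    obtain k where xk: "(x,k)\<in>M" using dom by auto
    moreover have "c x = k" unfolding c_def by (rule the_pair[OF xk]) (rule Mfun'[OF _ xk])
    ultimately show ?thesis by simp
  qed
  show ?thesis
  proof (intro exI allI impI)
    fix x y assume "y \<in> R x"
    then show "c x \<noteq> c y" using cM[of x] cM[of y] Mv pv3 by metis
  qed
qed



definition cyc :: "('a \<times> 'a) set \<Rightarrow> (nat \<Rightarrow> 'a) \<Rightarrow> nat \<Rightarrow> bool" where
  "cyc E p n \<longleftrightarrow> 0 < n \<and> p n = p 0 \<and> (\<forall>i<n. (p i, p (Suc i)) \<in> E)"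

definition hit :: "('a \<times> 'a set) set \<Rightarrow> (nat \<Rightarrow> 'a) \<Rightarrow> nat \<Rightarrow> bool" where
  "hit X p n \<longleftrightarrow> (\<exists>i<n. (\<exists>F. (p i, F) \<in> X \<and> p (Suc i) \<in> F) \<or> (\<exists>F. (p (Suc i), F) \<in> X \<and> p i \<in> F))"

definition svalid :: "('a \<times> 'a) set \<Rightarrow> ('a \<times> 'a set) set \<Rightarrow> bool" where
  "svalid E X \<longleftrightarrow> (\<forall>x F G. (x,F)\<in>X \<longrightarrow> (x,G)\<in>X \<longrightarrow> F=G)
     \<and> (\<forall>x F. (x,F)\<in>X \<longrightarrow> finite F \<and> x \<notin> F)
     \<and> (\<forall>p n. cyc E p n \<longrightarrow> (\<exists>i<n. p i \<in> Domain X) \<longrightarrow> hit X p n)"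

lemma sv1: "svalid E X \<Longrightarrow> (x,F)\<in>X \<Longrightarrow> (x,G)\<in>X \<Longrightarrow> F=G"
  unfolding svalid_def by metis
lemma sv2: "svalid E X \<Longrightarrow> (x,F)\<in>X \<Longrightarrow> finite F \<and> x \<notin> F"
  unfolding svalid_def by metis
lemma sv3: "svalid E X \<Longrightarrow> cyc E p n \<Longrightarrow> i < n \<Longrightarrow> p i \<in> Domain X \<Longrightarrow> hit X p n"
  unfolding svalid_def by metis

lemma hit_mono: "hit X p n \<Longrightarrow> X \<subseteq> Y \<Longrightarrow> hit Y p n"
  unfolding hit_def by blast

lemma rich_or_small:
  assumes dg: "digraph V E" and ns: "\<not> dichromatic_le_omega V E"
  shows "\<exists>U. U \<subseteq> V \<and> U \<noteq> {} \<and> (\<forall>v\<in>U. infinite {w\<in>U. (v,w)\<in>E} \<and> infinite {w\<in>U. (w,v)\<in>E})"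
proof -
  have EV: "E \<subseteq> V \<times> V" and asy: "\<And>u v. (u,v)\<in>E \<Longrightarrow> (v,u)\<notin>E" using dg unfolding digraph_def by auto
  have nl: "(v,v) \<notin> E" for v using asy by blast
  let ?A = "{X. svalid E X}"
  have "\<forall>C\<in>chains ?A. \<Union>C \<in> ?A"
  proof
    fix C assume C: "C \<in> chains ?A"
    then have sub: "\<And>X. X \<in> C \<Longrightarrow> svalid E X" and ch: "\<forall>X\<in>C. \<forall>Y\<in>C. X \<subseteq> Y \<or> Y \<subseteq> X"
      by (auto simp: chains_def chain_subset_def)
    show "\<Union>C \<in> ?A" unfolding mem_Collect_eq svalid_def
    proof (intro conjI allI impI)
      fix x F G assume "(x,F) \<in> \<Union>C" "(x,G) \<in> \<Union>C"
      then obtain X Y where XY: "X\<in>C" "Y\<in>C" "(x,F)\<in>X" "(x,G)\<in>Y" by auto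
      moreover have "X \<subseteq> Y \<or> Y \<subseteq> X" using ch XY by blast
      ultimately show "F = G" using sv1 sub by (metis subsetD)
    next
      fix x F assume "(x,F) \<in> \<Union>C"
      then obtain X where "X\<in>C" "(x,F)\<in>X" by auto
      then show "finite F" "x \<notin> F" using sv2 sub by metis+
    next
      fix p n assume cy: "cyc E p n" and "\<exists>i<n. p i \<in> Domain (\<Union>C)"
      then obtain i X where "i < n" "X \<in> C" "p i \<in> Domain X" by auto
      then have "hit X p n" using sv3 sub cy by metis
      then show "hit (\<Union>C) p n" using hit_mono \<open>X \<in> C\<close> by (metis Union_upper)
    qed
  qed
  then obtain M where MA: "svalid E M" and mx: "\<And>X. svalid E X \<Longrightarrow> M \<subseteq> X \<Longrightarrow> X = M"
    using Zorn_Lemma[of ?A] by auto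
  define S where "S = Domain M"
  show ?thesis
  proof (cases "V \<subseteq> S")
    case True
    define R where "R x = (if x \<in> S then (THE F. (x,F)\<in>M) else {})" for x
    have RM: "(x, R x) \<in> M" if xS: "x \<in> S" for x
    proof -
      obtain F where xF: "(x,F)\<in>M" using xS by (auto simp: S_def)
      have "R x = F" unfolding R_def using that
        by (simp add: the_pair[OF xF] sv1[OF MA _ xF])
      then show ?thesis using xF by simp
    qed
    have Rfin: "finite (R x) \<and> x \<notin> R x" for x
      using RM sv2[OF MA] by (cases "x \<in> S") (auto simp: R_def)
    obtain c :: "'a \<Rightarrow> nat" where c: "\<And>x y. y \<in> R x \<Longrightarrow> c x \<noteq> c y"
      using colouring[of R] Rfin by blast
    define \<A> where "\<A> = range (\<lambda>k. {v\<in>V. c v = k})"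
    have "dichromatic_le_omega V E"
      unfolding dichromatic_le_omega_def
    proof (intro exI conjI ballI)
      show "countable \<A>" unfolding \<A>_def by simp
      show "V \<subseteq> \<Union>\<A>" unfolding \<A>_def by auto
    next
      fix A assume "A \<in> \<A>"
      then obtain k where A: "A = {v\<in>V. c v = k}" unfolding \<A>_def by auto
      then show "A \<subseteq> V" by auto
      show "acyclic_set E A" unfolding acyclic_set_def acyclic_def
      proof (intro allI notI)
        fix x assume "(x,x) \<in> (E \<inter> A \<times> A)\<^sup>+"
        then obtain n where n: "n > 0" "(x,x) \<in> (E \<inter> A \<times> A) ^^ n" by (auto simp: trancl_power)
        then obtain p where p: "p 0 = x" "p n = x" "\<forall>i<n. (p i, p (Suc i)) \<in> E \<inter> A \<times> A"
          by (auto simp: relpow_fun_conv)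
        have cy: "cyc E p n" using p n unfolding cyc_def by auto
        have pA: "p i \<in> A" if "i < n" for i using p that by auto
        have pA': "p (Suc i) \<in> A" if "i < n" for i using p that by auto
        have "p 0 \<in> S" using pA[of 0] n A True by auto
        then have "hit M p n" using sv3[OF MA cy n(1)] unfolding S_def by simp
        then obtain i where i: "i < n" and
          h: "(\<exists>F. (p i, F) \<in> M \<and> p (Suc i) \<in> F) \<or> (\<exists>F. (p (Suc i), F) \<in> M \<and> p i \<in> F)"
          unfolding hit_def by blast
        have ci: "c (p i) = c (p (Suc i))" using pA[OF i] pA'[OF i] A by simp
        from h show False
        proof
          assume "\<exists>F. (p i, F) \<in> M \<and> p (Suc i) \<in> F"
          then obtain F where F: "(p i, F) \<in> M" "p (Suc i) \<in> F" by blast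
          then have "p i \<in> S" unfolding S_def by auto
          then have "F = R (p i)" using RM sv1[OF MA] F by metis
          then show False using c F ci by metis
        next
          assume "\<exists>F. (p (Suc i), F) \<in> M \<and> p i \<in> F"
          then obtain F where F: "(p (Suc i), F) \<in> M" "p i \<in> F" by blast
          then have "p (Suc i) \<in> S" unfolding S_def by auto
          then have "F = R (p (Suc i))" using RM sv1[OF MA] F by metis
          then show False using c F ci by metis
        qed
      qed
    qed
    then show ?thesis using ns by simp
  next
    case False
    define U where "U = V - S"
    have "U \<noteq> {}" using False unfolding U_def by auto
    moreover have "\<forall>v\<in>U. infinite {w\<in>U. (v,w)\<in>E} \<and> infinite {w\<in>U. (w,v)\<in>E}"
    proof (rule ccontr)
      assume "\<not> ?thesis"
      then obtain v where vU: "v \<in> U" and fin: "finite {w\<in>U. (v,w)\<in>E} \<or> finite {w\<in>U. (w,v)\<in>E}"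
        by blast
      have vS: "v \<notin> S" using vU unfolding U_def by auto
      have Ueq: "x \<notin> S \<and> (y,z) \<in> E \<and> (x = y \<or> x = z) \<Longrightarrow> x \<in> U" for x y z
        using EV unfolding U_def by auto
      from fin obtain F where F: "finite F" "v \<notin> F" and
        Fcase: "(F = {w. (v,w)\<in>E \<and> w \<notin> S}) \<or> (F = {w. (w,v)\<in>E \<and> w \<notin> S})"
      proof
        assume "finite {w\<in>U. (v,w)\<in>E}"
        moreover have "{w. (v,w)\<in>E \<and> w \<notin> S} = {w\<in>U. (v,w)\<in>E}" using Ueq unfolding U_def by blast
        ultimately show ?thesis using that[of "{w. (v,w)\<in>E \<and> w \<notin> S}"] nl by auto
      next
        assume "finite {w\<in>U. (w,v)\<in>E}"
        moreover have "{w. (w,v)\<in>E \<and> w \<notin> S} = {w\<in>U. (w,v)\<in>E}" using Ueq unfolding U_def by blast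
        ultimately show ?thesis using that[of "{w. (w,v)\<in>E \<and> w \<notin> S}"] nl by auto
      qed
      define X where "X = insert (v, F) M"
      have "svalid E X" unfolding svalid_def
      proof (intro conjI allI impI)
        fix x G H assume "(x,G)\<in>X" "(x,H)\<in>X"
        then show "G = H" using sv1[OF MA] vS unfolding X_def S_def by auto
      next
        fix x G assume "(x,G)\<in>X"
        then show "finite G" "x \<notin> G" using sv2[OF MA] F unfolding X_def by auto
      next
        fix p n assume cy: "cyc E p n" and ex: "\<exists>i<n. p i \<in> Domain X"
        have cy0: "0 < n" "p n = p 0" "\<And>i. i < n \<Longrightarrow> (p i, p (Suc i)) \<in> E" using cy unfolding cyc_def by auto
        show "hit X p n"
        proof (cases "\<exists>i<n. p i \<in> S")
          case True
          then have "hit M p n" using sv3[OF MA cy] unfolding S_def by blast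
          then show ?thesis using hit_mono unfolding X_def by blast
        next
          case False
          then have nS: "p i \<notin> S" if "i \<le> n" for i
            using that cy0(1,2) by (metis le_neq_implies_less)
          from ex False obtain j where j: "j < n" "p j = v" unfolding X_def S_def by auto
          from Fcase show ?thesis
          proof
            assume FF: "F = {w. (v,w)\<in>E \<and> w \<notin> S}"
            have "p (Suc j) \<in> F" using FF cy0(3)[OF j(1)] j nS[of "Suc j"] by auto
            then show ?thesis unfolding hit_def X_def using j by blast
          next
            assume FF: "F = {w. (w,v)\<in>E \<and> w \<notin> S}"
            obtain i where i: "i < n" "p (Suc i) = v"
            proof (cases j)
              case 0
              then show ?thesis using that[of "n - 1"] cy0 j by auto
            next
              case (Suc i)
              then show ?thesis using that[of i] j by auto
            qed
            have "p i \<in> F" using FF cy0(3)[OF i(1)] i nS[of i] by auto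
            then show ?thesis unfolding hit_def X_def using i by blast
          qed
        qed
      qed
      moreover have "M \<subseteq> X" unfolding X_def by auto
      ultimately have "X = M" using mx by blast
      then show False using vS unfolding X_def S_def by auto
    qed
    moreover have "U \<subseteq> V" unfolding U_def by auto
    ultimately show ?thesis by blast
  qed
qed



fun hcode :: "nat list \<Rightarrow> nat" where
  "hcode [] = 0"
| "hcode (n # r) = Suc (prod_encode (hcode r, n))"

lemma hcode_inj: "hcode xs = hcode ys \<Longrightarrow> xs = ys"
proof (induction xs arbitrary: ys)
  case Nil then show ?case by (cases ys) auto
next
  case (Cons a xs) then show ?case by (cases ys) auto
qed

definition gcode :: "nat list \<Rightarrow> nat" where "gcode s = hcode (rev s)"

lemma gcode_inj: "gcode s = gcode s' \<Longrightarrow> s = s'"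
  unfolding gcode_def using hcode_inj by fastforce

lemma gcode_snoc: "gcode (t @ [n]) = Suc (prod_encode (gcode t, n))"
  unfolding gcode_def by simp

lemma gcode_less: "gcode t < gcode (t @ [n])"
  unfolding gcode_snoc using le_prod_encode_1[of "gcode t" n] by simp

definition Pc :: "'a set \<Rightarrow> ('a \<times> 'a) set \<Rightarrow> (nat list \<Rightarrow> nat \<Rightarrow> bool) \<Rightarrow> 'a list \<Rightarrow> nat \<Rightarrow> 'a \<Rightarrow> bool" where
  "Pc U E d L k w \<longleftrightarrow> w \<in> U \<and> w \<notin> set L \<and>
     (\<forall>t n. gcode (t @ [n]) = k \<longrightarrow> (if d t n then (L ! gcode t, w) \<in> E else (w, L ! gcode t) \<in> E))"

primrec Fs :: "'a set \<Rightarrow> ('a \<times> 'a) set \<Rightarrow> (nat list \<Rightarrow> nat \<Rightarrow> bool) \<Rightarrow> nat \<Rightarrow> 'a list" where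
  "Fs U E d 0 = []"
| "Fs U E d (Suc k) = Fs U E d k @ [SOME w. Pc U E d (Fs U E d k) k w]"

lemma Fs_len: "length (Fs U E d k) = k"
  by (induction k) auto

lemma Fs_prefix: "i < k \<Longrightarrow> k \<le> m \<Longrightarrow> Fs U E d m ! i = Fs U E d k ! i"
proof (induction m)
  case 0 then show ?case by simp
next
  case (Suc m)
  show ?case
  proof (cases "k = Suc m")
    case True then show ?thesis by simp
  next
    case False
    then have "k \<le> m" using Suc by simp
    then have "i < length (Fs U E d m)" using Suc Fs_len by (metis less_le_trans)
    then show ?thesis using Suc \<open>k \<le> m\<close> by (simp add: nth_append)
  qed
qed

lemma infinite_avoid: "infinite A \<Longrightarrow> finite B \<Longrightarrow> \<exists>x\<in>A. x \<notin> B"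
  by (meson finite_subset subsetI)

lemma tree_embed:
  assumes UV: "U \<subseteq> V" and Une: "U \<noteq> {}"
    and rich: "\<forall>v\<in>U. infinite {w\<in>U. (v,w)\<in>E} \<and> infinite {w\<in>U. (w,v)\<in>E}"
  shows "embeds (UNIV :: nat list set) (tree_orientation_edges d) V E"
proof -
  have Uinf: "infinite U"
  proof -
    obtain u where "u \<in> U" using Une by auto
    then have "infinite {w\<in>U. (u,w)\<in>E}" using rich by auto
    then show ?thesis using infinite_super[of "{w\<in>U. (u,w)\<in>E}" U] by auto
  qed
  let ?F = "Fs U E d"
  define inv where "inv k \<longleftrightarrow> set (?F k) \<subseteq> U \<and> distinct (?F k) \<and>
    (\<forall>t n. gcode (t @ [n]) < k \<longrightarrow> (if d t n then (?F k ! gcode t, ?F k ! gcode (t @ [n])) \<in> E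
                                   else (?F k ! gcode (t @ [n]), ?F k ! gcode t) \<in> E))" for k
  have I: "inv k" for k
  proof (induction k)
    case 0 then show ?case unfolding inv_def by simp
  next
    case (Suc k)
    let ?L = "?F k"
    have len: "length ?L = k" by (rule Fs_len)
    have LU: "set ?L \<subseteq> U" using Suc unfolding inv_def by simp
    have ex: "\<exists>w. Pc U E d ?L k w"
    proof (cases "\<exists>t n. gcode (t @ [n]) = k")
      case True
      then obtain t n where tn: "gcode (t @ [n]) = k" by blast
      have gt: "gcode t < k" using tn gcode_less by metis
      have aU: "?L ! gcode t \<in> U" using LU len gt by (metis nth_mem subsetD)
      have uniq: "t' = t \<and> n' = n" if "gcode (t' @ [n']) = k" for t' n'
        using gcode_inj[of "t' @ [n']" "t @ [n]"] that tn by simp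
      show ?thesis
      proof (cases "d t n")
        case True
        obtain w where w: "w \<in> {w\<in>U. (?L ! gcode t, w)\<in>E}" "w \<notin> set ?L"
          using infinite_avoid[of "{w\<in>U. (?L ! gcode t, w)\<in>E}" "set ?L"] rich aU by blast
        have "Pc U E d ?L k w" unfolding Pc_def using w uniq True by auto
        then show ?thesis by blast
      next
        case False
        obtain w where w: "w \<in> {w\<in>U. (w, ?L ! gcode t)\<in>E}" "w \<notin> set ?L"
          using infinite_avoid[of "{w\<in>U. (w, ?L ! gcode t)\<in>E}" "set ?L"] rich aU by blast
        have "Pc U E d ?L k w" unfolding Pc_def using w uniq False by auto
        then show ?thesis by blast
      qed
    next
      case False
      obtain w where "w \<in> U" "w \<notin> set ?L" using infinite_avoid[OF Uinf, of "set ?L"] by blast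
      then have "Pc U E d ?L k w" unfolding Pc_def using False by auto
      then show ?thesis by blast
    qed
    define w where "w = (SOME w. Pc U E d ?L k w)"
    have Pw: "Pc U E d ?L k w" unfolding w_def using someI_ex[OF ex] .
    have FS: "?F (Suc k) = ?L @ [w]" unfolding w_def by simp
    show ?case unfolding inv_def FS
    proof (intro conjI allI impI)
      show "set (?L @ [w]) \<subseteq> U" using LU Pw unfolding Pc_def by auto
      show "distinct (?L @ [w])" using Suc Pw unfolding inv_def Pc_def by auto
    next
      fix t n assume lt: "gcode (t @ [n]) < Suc k"
      have gt: "gcode t < gcode (t @ [n])" by (rule gcode_less)
      show "if d t n then ((?L @ [w]) ! gcode t, (?L @ [w]) ! gcode (t @ [n])) \<in> E
            else ((?L @ [w]) ! gcode (t @ [n]), (?L @ [w]) ! gcode t) \<in> E"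
      proof (cases "gcode (t @ [n]) < k")
        case True
        then show ?thesis using Suc gt len unfolding inv_def by (simp add: nth_append)
      next
        case False
        then have eq: "gcode (t @ [n]) = k" using lt by simp
        then have "gcode t < k" using gt by simp
        then show ?thesis using Pw eq len unfolding Pc_def by (simp add: nth_append)
      qed
    qed
  qed
  define f where "f s = ?F (Suc (gcode s)) ! gcode s" for s
  have fm: "f s = ?F m ! gcode s" if "gcode s < m" for s m
    unfolding f_def using Fs_prefix[of "gcode s" "Suc (gcode s)" m U E d] that by simp
  show ?thesis unfolding embeds_def
  proof (intro exI conjI)
    show "inj_on f UNIV"
    proof (rule inj_onI)
      fix s s' assume "f s = f s'"
      define m where "m = Suc (max (gcode s) (gcode s'))"
      have "?F m ! gcode s = ?F m ! gcode s'" using fm[of s m] fm[of s' m] \<open>f s = f s'\<close> unfolding m_def by simp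
      moreover have "distinct (?F m)" using I unfolding inv_def by simp
      ultimately have "gcode s = gcode s'" using Fs_len[of U E d m] unfolding m_def
        by (simp add: nth_eq_iff_index_eq)
      then show "s = s'" by (rule gcode_inj)
    qed
    show "f ` UNIV \<subseteq> V"
    proof
      fix y assume "y \<in> f ` UNIV"
      then obtain s where "y = f s" by auto
      then have "y \<in> set (?F (Suc (gcode s)))" unfolding f_def using Fs_len by (metis lessI nth_mem)
      then show "y \<in> V" using I UV unfolding inv_def by blast
    qed
    show "\<forall>(x, y)\<in>tree_orientation_edges d. (f x, f y) \<in> E"
    proof (safe)
      fix x y assume "(x,y) \<in> tree_orientation_edges d"
      then obtain s n where c: "(x = s \<and> y = s @ [n] \<and> d s n) \<or> (x = s @ [n] \<and> y = s \<and> \<not> d s n)"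
        unfolding tree_orientation_edges_def by blast
      define m where "m = Suc (gcode (s @ [n]))"
      have "gcode s < m" "gcode (s @ [n]) < m" using gcode_less[of s n] unfolding m_def by auto
      then have e1: "f s = ?F m ! gcode s" and e2: "f (s @ [n]) = ?F m ! gcode (s @ [n])" using fm by auto
      have "if d s n then (?F m ! gcode s, ?F m ! gcode (s @ [n])) \<in> E
            else (?F m ! gcode (s @ [n]), ?F m ! gcode s) \<in> E"
        using I[of m] unfolding inv_def m_def by blast
      then show "(f x, f y) \<in> E" using c e1 e2 by (auto split: if_splits)
    qed
  qed
qed

lemma ray_from_tree:
  assumes "embeds (UNIV :: nat list set) (tree_orientation_edges (\<lambda>_ _. True)) V E"
  shows "embeds (UNIV :: nat set) ray_edges V E"
proof -
  obtain f where f: "inj_on f (UNIV :: nat list set)" "f ` UNIV \<subseteq> V"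
    "\<forall>(x, y) \<in> tree_orientation_edges (\<lambda>_ _. True). (f x, f y) \<in> E"
    using assms unfolding embeds_def by blast
  define g where "g n = f (replicate n (0::nat))" for n
  show ?thesis unfolding embeds_def
  proof (intro exI conjI)
    show "inj_on g UNIV" unfolding g_def using f(1)
      by (auto simp: inj_on_def) (metis length_replicate)
    show "g ` UNIV \<subseteq> V" using f(2) unfolding g_def by auto
    show "\<forall>(x, y)\<in>ray_edges. (g x, g y) \<in> E"
    proof safe
      fix x y assume "(x,y) \<in> ray_edges"
      then have y: "y = Suc x" unfolding ray_edges_def by auto
      have "(replicate x (0::nat), replicate x 0 @ [0]) \<in> tree_orientation_edges (\<lambda>_ _. True)"
        unfolding tree_orientation_edges_def by blast
      then show "(g x, g y) \<in> E" using f(3) y unfolding g_def by (auto simp: replicate_append_same)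
    qed
  qed
qed


theorem corollary3p2:
  fixes V :: "'a set" and E :: "('a \<times> 'a) set"
  assumes "digraph V E"
    and "\<not> dichromatic_le_omega V E"
  shows "embeds (UNIV :: nat set) ray_edges V E
    \<and> (\<forall>d. embeds (UNIV :: nat list set) (tree_orientation_edges d) V E)"
proof -
  obtain U where "U \<subseteq> V" "U \<noteq> {}" "\<forall>v\<in>U. infinite {w\<in>U. (v,w)\<in>E} \<and> infinite {w\<in>U. (w,v)\<in>E}"
    using rich_or_small[OF assms] by blast
  then have T: "\<forall>d. embeds (UNIV :: nat list set) (tree_orientation_edges d) V E"
    using tree_embed by blast
  then show ?thesis using ray_from_tree by blast
qed

end
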